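(* Let $W=(w_{ij})_{i,j=1}^m$ be symmetric with nonnegative entries, and let $\lambda\ge0$, $\sigma\ge0$, $c\in\mathbb{R}^m$. Define $$F(u)=\frac{\lambda}{2}\sum_{i,j=1}^m w_{ij}|u_i-u_j|+\langle u,c\rangle+\sigma\max_iu_i.$$ Then: 1. Duality: $$\min_{u\in\mathbb{R}^m_+}\Big(F(u)+\tfrac12\|u\|_2^2\Big)=-\min_{\substack{\alpha\in\mathbb{R}^{m\times m},\ \|\alpha\|_\infty\le1,\ \alpha_{ij}=-\alpha_{ji}}}\ \min_{v\in S_m}\ \frac12\Big\|P_{\mathbb{R}^m_+}\Big(-c-\tfrac{\lambda}{2}A\alpha-\sigma v\Big)\Big\|_2^2.$$ 2. If $(\alpha^*,v^* )$ attains the minimum on the right, then $u^*=P_{\mathbb{R}^m_+}\big(-c-\frac{\lambda}{2}A\alpha^*-\sigma v^*\big)$ is the unique minimizer of $F(u)+\frac12\|u\|_2^2$ over $\mathbb{R}^m_+$. 3. If $u^*\ne0$, then $u^*/\|u^*\|_2$ minimizes $F$ over $\{u\in\mathbb{R}^m_+:\|u\|_2\le1\}$. If $u^*=0$, then $0$ is such a minimizer.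
   Context: Notation used in the statement: - $(A\alpha)_i:=\sum_j w_{ij}(\alpha_{ij}-\alpha_{ji})$. - $\|\alpha\|_\infty=\max_{i,j}|\alpha_{ij}|$. - $P_{\mathbb{R}^m_+}$ is the Euclidean projection onto the nonnegative orthant (componentwise positive part). - $S_m=\{v\in\mathbb{R}^m: v_i\ge0,\ \sum_iv_i=1\}$ is the probability simplex. *)

theory Defs
  imports "HOL-Analysis.Analysis"
begin

definition Aop :: "real^'m^'m \<Rightarrow> real^'m^'m \<Rightarrow> real^'m" where
  "Aop W \<alpha> = (\<chi> i. \<Sum>j\<in>UNIV. W$i$j * (\<alpha>$i$j - \<alpha>$j$i))"

definition pos_part :: "real^'m \<Rightarrow> real^'m" where
  "pos_part u = (\<chi> i. max (u$i) 0)"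

definition orthant :: "(real^'m) set" where
  "orthant = {u. \<forall>i. 0 \<le> u$i}"

definition simplex_set :: "(real^'m) set" where
  "simplex_set = {v. (\<forall>i. 0 \<le> v$i) \<and> (\<Sum>i\<in>UNIV. v$i) = 1}"

definition dual_feasible :: "(real^'m^'m) set" where
  "dual_feasible = {\<alpha>. (\<forall>i j. \<bar>\<alpha>$i$j\<bar> \<le> 1) \<and> (\<forall>i j. \<alpha>$i$j = - \<alpha>$j$i)}"

definition Fobj :: "real \<Rightarrow> real \<Rightarrow> real^'m^'m \<Rightarrow> real^'m \<Rightarrow> real^'m \<Rightarrow> real" where
  "Fobj lam \<sigma> W c u =
     lam / 2 * (\<Sum>i\<in>UNIV. \<Sum>j\<in>UNIV. W$i$j * \<bar>u$i - u$j\<bar>) + inner u c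
     + \<sigma> * Max (range (%i. u$i))"

definition primal_obj :: "real \<Rightarrow> real \<Rightarrow> real^'m^'m \<Rightarrow> real^'m \<Rightarrow> real^'m \<Rightarrow> real" where
  "primal_obj lam \<sigma> W c u = Fobj lam \<sigma> W c u + 1/2 * (norm u)^2"

definition dual_point :: "real \<Rightarrow> real \<Rightarrow> real^'m^'m \<Rightarrow> real^'m \<Rightarrow> real^'m^'m \<Rightarrow> real^'m \<Rightarrow> real^'m" where
  "dual_point lam \<sigma> W c \<alpha> v = pos_part (- c - (lam/2) *\<^sub>R Aop W \<alpha> - \<sigma> *\<^sub>R v)"

definition dual_obj :: "real \<Rightarrow> real \<Rightarrow> real^'m^'m \<Rightarrow> real^'m \<Rightarrow> real^'m^'m \<Rightarrow> real^'m \<Rightarrow> real" where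
  "dual_obj lam \<sigma> W c \<alpha> v = 1/2 * (norm (dual_point lam \<sigma> W c \<alpha> v))^2"

end

theory Submission
  imports Defs
begin

lemma nsq: "(norm (x::real^'n))^2 = (\<Sum>i\<in>UNIV. (x$i)^2)"
  by (simp only: power2_norm_eq_inner inner_vec_def) (simp add: power2_eq_square)

lemma inner_comp: "inner (x::real^'n) y = (\<Sum>i\<in>UNIV. x$i * y$i)"
  by (simp add: inner_vec_def)

lemma hexp: fixes x d :: real
  shows "(max (-(x+d)) 0)^2 \<le> (max (-x) 0)^2 - 2*max (-x) 0 * d + d^2"
proof (cases "x \<le> 0")
  case True
  have "(max (-(x+d)) 0)^2 \<le> \<bar>x+d\<bar>^2" by (rule power_mono) auto
  also have "\<dots> = (max (-x) 0)^2 - 2*max (-x) 0 * d + d^2" using True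
    by (simp add: max_def power2_eq_square algebra_simps)
  finally show ?thesis .
next
  case False
  have "(max (-(x+d)) 0)^2 \<le> \<bar>d\<bar>^2" by (rule power_mono) (use False in auto)
  then show ?thesis using False by (simp add: max_def)
qed

lemma first_order:
  fixes g0 g :: "real^'n"
  assumes H: "\<forall>t. 0<t \<and> t\<le>1 \<longrightarrow> (norm (pos_part (-g0)))^2 \<le> (norm (pos_part (-(g0 + t *\<^sub>R (g - g0)))))^2"
  shows "inner (pos_part (-g0)) (g - g0) \<le> 0"
proof (rule ccontr)
  define p where "p = pos_part (-g0)"
  define d where "d = g - g0"
  define a where "a = inner p d"
  define b where "b = (\<Sum>i\<in>UNIV. (d$i)^2)"
  assume "\<not> inner (pos_part (-g0)) (g - g0) \<le> 0"
  hence apos: "a > 0" by (simp add: a_def p_def d_def)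
  have b0: "b \<ge> 0" unfolding b_def by (simp add: sum_nonneg)
  have key: "2*t*a \<le> t^2 * b" if t: "0<t" "t\<le>1" for t
  proof -
    have "(norm p)^2 \<le> (norm (pos_part (-(g0 + t *\<^sub>R d))))^2" using H t by (simp add: p_def d_def)
    also have "\<dots> = (\<Sum>i\<in>UNIV. (max (-(g0$i + t*d$i)) 0)^2)" by (simp add: nsq pos_part_def)
    also have "\<dots> \<le> (\<Sum>i\<in>UNIV. (max (-(g0$i)) 0)^2 - 2*max (-(g0$i)) 0 * (t*d$i) + (t*d$i)^2)"
      by (rule sum_mono) (rule hexp)
    also have "\<dots> = (norm p)^2 - 2*t*a + t^2*b"
      by (simp add: nsq p_def pos_part_def a_def inner_comp b_def sum_subtractf sum.distrib
            sum_distrib_left power_mult_distrib algebra_simps)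
    finally show ?thesis by simp
  qed
  show False
  proof (cases "b = 0")
    case True then show ?thesis using key[of 1] apos by simp
  next
    case False
    hence bp: "b > 0" using b0 by simp
    define t where "t = min 1 (a/b)"
    have t0: "0 < t" "t \<le> 1" using apos bp by (auto simp: t_def)
    have "t * b \<le> a" using bp by (simp add: t_def min_def field_simps)
    hence "t^2 * b \<le> t * a" using t0 by (simp add: power2_eq_square mult.assoc mult_left_mono)
    moreover have "t*a > 0" using t0 apos by simp
    ultimately show False using key[OF t0] by linarith
  qed
qed

definition gvec :: "real \<Rightarrow> real \<Rightarrow> real^'m^'m \<Rightarrow> real^'m \<Rightarrow> real^'m^'m \<Rightarrow> real^'m \<Rightarrow> real^'m" where
  "gvec lam \<sigma> W c \<alpha> v = c + (lam/2) *\<^sub>R Aop W \<alpha> + \<sigma> *\<^sub>R v"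

lemma dual_point_g: "dual_point lam \<sigma> W c \<alpha> v = pos_part (- gvec lam \<sigma> W c \<alpha> v)"
  unfolding dual_point_def gvec_def by (simp add: algebra_simps)

lemma dual_obj_g: "dual_obj lam \<sigma> W c \<alpha> v = 1/2 * (norm (pos_part (- gvec lam \<sigma> W c \<alpha> v)))^2"
  unfolding dual_obj_def dual_point_g ..

lemma Aop_inner:
  assumes symW: "\<forall>i j. W$i$j = W$j$i"
  shows "inner u (Aop W \<alpha>) = (\<Sum>i\<in>UNIV. \<Sum>j\<in>UNIV. W$i$j * \<alpha>$i$j * (u$i - u$j))"
proof -
  have "inner u (Aop W \<alpha>) = (\<Sum>i\<in>UNIV. \<Sum>j\<in>UNIV. u$i * W$i$j * \<alpha>$i$j) - (\<Sum>i\<in>UNIV. \<Sum>j\<in>UNIV. u$i * W$i$j * \<alpha>$j$i)"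
    by (simp add: inner_comp Aop_def sum_distrib_left sum_subtractf algebra_simps)
  also have "(\<Sum>i\<in>UNIV. \<Sum>j\<in>UNIV. u$i * W$i$j * \<alpha>$j$i) = (\<Sum>j\<in>UNIV. \<Sum>i\<in>UNIV. u$i * W$i$j * \<alpha>$j$i)"
    by (rule sum.swap)
  also have "\<dots> = (\<Sum>i\<in>UNIV. \<Sum>j\<in>UNIV. u$j * W$i$j * \<alpha>$i$j)"
    using symW by simp
  finally show ?thesis by (simp add: sum_subtractf[symmetric] algebra_simps)
qed

lemma inner_gvec: "inner u (gvec lam \<sigma> W c \<alpha> v) = inner u c + lam/2 * inner u (Aop W \<alpha>) + \<sigma> * inner u v"
  by (simp add: gvec_def inner_add_right)

lemma Max_ge': "u$i \<le> Max (range (\<lambda>i. (u::real^'m)$i))"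
  by (rule Max_ge) auto

lemma Fge:
  assumes symW: "\<forall>i j. W$i$j = W$j$i" and nonnegW: "\<forall>i j. 0 \<le> W$i$j"
    and lam: "0 \<le> lam" and sig: "0 \<le> \<sigma>"
    and a: "\<alpha> \<in> dual_feasible" and v: "v \<in> simplex_set"
  shows "inner u (gvec lam \<sigma> W c \<alpha> v) \<le> Fobj lam \<sigma> W c u"
proof -
  have "inner u (Aop W \<alpha>) \<le> (\<Sum>i\<in>UNIV. \<Sum>j\<in>UNIV. W$i$j * \<bar>u$i - u$j\<bar>)"
    unfolding Aop_inner[OF symW]
  proof (intro sum_mono)
    fix i j
    have ab: "\<bar>\<alpha>$i$j\<bar> \<le> 1" using a unfolding dual_feasible_def mem_Collect_eq by blast
    have "\<alpha>$i$j * (u$i - u$j) \<le> \<bar>\<alpha>$i$j * (u$i - u$j)\<bar>" by simp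
    also have "\<bar>\<alpha>$i$j * (u$i - u$j)\<bar> \<le> 1 * \<bar>u$i - u$j\<bar>" unfolding abs_mult
      using ab by (intro mult_right_mono) auto
    finally have "\<alpha>$i$j * (u$i - u$j) \<le> \<bar>u$i - u$j\<bar>" by simp
    then show "W$i$j * \<alpha>$i$j * (u$i - u$j) \<le> W$i$j * \<bar>u$i - u$j\<bar>"
      using nonnegW by (simp add: mult.assoc mult_left_mono)
  qed
  then have 1: "lam/2 * inner u (Aop W \<alpha>) \<le> lam/2 * (\<Sum>i\<in>UNIV. \<Sum>j\<in>UNIV. W$i$j * \<bar>u$i - u$j\<bar>)"
    by (rule mult_left_mono) (use lam in auto)
  have "inner u v \<le> Max (range (\<lambda>i. u$i))"
  proof -
    have "inner u v = (\<Sum>i\<in>UNIV. u$i * v$i)" by (simp add: inner_comp)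
    also have "\<dots> \<le> (\<Sum>i\<in>UNIV. Max (range (\<lambda>i. u$i)) * v$i)"
      using v by (intro sum_mono mult_right_mono Max_ge') (auto simp: simplex_set_def)
    also have "\<dots> = Max (range (\<lambda>i. u$i))"
      using v by (simp add: sum_distrib_left[symmetric] simplex_set_def)
    finally show ?thesis .
  qed
  then have 2: "\<sigma> * inner u v \<le> \<sigma> * Max (range (\<lambda>i. u$i))"
    by (rule mult_left_mono) (use sig in auto)
  show ?thesis unfolding inner_gvec Fobj_def using 1 2 by linarith
qed

lemma Fattain:
  fixes u :: "real^'m"
  assumes symW: "\<forall>i j. W$i$j = W$j$i"
  shows "\<exists>\<alpha>\<in>dual_feasible. \<exists>v\<in>simplex_set. inner u (gvec lam \<sigma> W c \<alpha> v) = Fobj lam \<sigma> W c u"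
proof -
  define \<alpha> :: "real^'m^'m" where "\<alpha> = (\<chi> i j. sgn (u$i - u$j))"
  have aF: "\<alpha> \<in> dual_feasible" unfolding dual_feasible_def \<alpha>_def
    by (auto simp: sgn_if)
  have "Max (range (\<lambda>i. u$i)) \<in> range (\<lambda>i. u$i)" by (rule Max_in) auto
  then obtain k where k: "u$k = Max (range (\<lambda>i. u$i))" by (metis (mono_tags) rangeE)
  define v :: "real^'m" where "v = (\<chi> i. if i = k then 1 else 0)"
  have vS: "v \<in> simplex_set" unfolding simplex_set_def v_def by simp
  have sg: "sgn x * x = \<bar>x\<bar>" for x :: real by (simp add: sgn_if)
  have "inner u (Aop W \<alpha>) = (\<Sum>i\<in>UNIV. \<Sum>j\<in>UNIV. W$i$j * \<bar>u$i - u$j\<bar>)"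
    unfolding Aop_inner[OF symW] \<alpha>_def
    by (simp add: mult.assoc sg)
  moreover have "inner u v = u$k" by (simp add: inner_comp v_def if_distrib cong: if_cong)
  ultimately have "inner u (gvec lam \<sigma> W c \<alpha> v) = Fobj lam \<sigma> W c u"
    unfolding inner_gvec Fobj_def k by simp
  with aF vS show ?thesis by blast
qed

lemma quad:
  assumes u: "u \<in> orthant"
  shows "inner u g + 1/2 * (norm u)^2 \<ge> - 1/2 * (norm (pos_part (-g)))^2 + 1/2 * (norm (u - pos_part (-g)))^2"
proof -
  have c: "u$i * g$i + 1/2 * (u$i)^2 \<ge> - 1/2 * (max (-g$i) 0)^2 + 1/2 * (u$i - max (-g$i) 0)^2" for i
  proof -
    have "0 \<le> u$i * max (g$i) 0" using u by (simp add: orthant_def)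
    moreover have "u$i * g$i + 1/2 * (u$i)^2 - (- 1/2 * (max (-g$i) 0)^2 + 1/2 * (u$i - max (-g$i) 0)^2)
        = u$i * max (g$i) 0" by (simp add: max_def power2_eq_square algebra_simps)
    ultimately show ?thesis by linarith
  qed
  have "- 1/2 * (norm (pos_part (-g)))^2 + 1/2 * (norm (u - pos_part (-g)))^2
     = (\<Sum>i\<in>UNIV. - 1/2 * (max (-g$i) 0)^2 + 1/2 * (u$i - max (-g$i) 0)^2)"
    by (subst sum.distrib) (simp add: nsq pos_part_def sum_distrib_left)
  also have "\<dots> \<le> (\<Sum>i\<in>UNIV. u$i * g$i + 1/2 * (u$i)^2)" by (rule sum_mono) (rule c)
  also have "\<dots> = inner u g + 1/2 * (norm u)^2"
    by (subst sum.distrib) (simp add: nsq inner_comp sum_distrib_left)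
  finally show ?thesis .
qed

lemma quad_eq:
  "inner (pos_part (-g)) g + 1/2 * (norm (pos_part (-g)))^2 = - 1/2 * (norm (pos_part (-g)))^2"
proof -
  have e: "(max (-g$i) 0) * g$i + 1/2 * (max (-g$i) 0)^2 = - 1/2 * (max (-g$i) 0)^2" for i
    by (simp add: max_def power2_eq_square)
  have "inner (pos_part (-g)) g + 1/2 * (norm (pos_part (-g)))^2 = (\<Sum>i\<in>UNIV. (max (-g$i) 0) * g$i + 1/2 * (max (-g$i) 0)^2)"
    by (subst sum.distrib) (simp add: nsq inner_comp pos_part_def sum_distrib_left)
  also have "\<dots> = (\<Sum>i\<in>UNIV. - 1/2 * (max (-g$i) 0)^2)" by (rule sum.cong[OF refl]) (rule e)
  also have "\<dots> = - 1/2 * (norm (pos_part (-g)))^2"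
    by (simp add: nsq pos_part_def sum_distrib_left)
  finally show ?thesis .
qed

lemma pos_part_orth: "pos_part x \<in> orthant"
  by (simp add: pos_part_def orthant_def)

lemma Fhom:
  assumes "0 \<le> t"
  shows "Fobj lam \<sigma> W c (t *\<^sub>R u) = t * Fobj lam \<sigma> W c u"
proof -
  have m: "Max (range (\<lambda>i. (t *\<^sub>R u)$i)) = t * Max (range (\<lambda>i. u$i))"
  proof -
    have "range (\<lambda>i. (t *\<^sub>R u)$i) = (\<lambda>x. t * x) ` range (\<lambda>i. u$i)" by auto
    moreover have "mono (\<lambda>x::real. t * x)" using assms by (auto intro: monoI mult_left_mono)
    ultimately show ?thesis using mono_Max_commute[of "\<lambda>x. t*x" "range (\<lambda>i. u$i)"] by auto
  qed
  have "\<bar>t * u$i - t * u$j\<bar> = t * \<bar>u$i - u$j\<bar>" for i j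
    using assms by (simp add: right_diff_distrib[symmetric] abs_mult)
  then have "(\<Sum>i\<in>UNIV. \<Sum>j\<in>UNIV. W$i$j * \<bar>(t *\<^sub>R u)$i - (t *\<^sub>R u)$j\<bar>)
     = t * (\<Sum>i\<in>UNIV. \<Sum>j\<in>UNIV. W$i$j * \<bar>u$i - u$j\<bar>)"
    by (simp add: sum_distrib_left mult.left_commute)
  then show ?thesis unfolding Fobj_def m
    by (simp add: distrib_left mult.left_commute)
qed

lemma F0: "Fobj lam \<sigma> W c 0 = 0"
  using Fhom[of 0 lam \<sigma> W c 0] by simp

lemma Aop_lin: "Aop W (a + t *\<^sub>R (b - a)) = Aop W a + t *\<^sub>R (Aop W b - Aop W a)"
proof -
  have "(\<Sum>j\<in>UNIV. W$i$j * ((a$i$j + t * (b$i$j - a$i$j)) - (a$j$i + t * (b$j$i - a$j$i))))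
     = (\<Sum>j\<in>UNIV. W$i$j * (a$i$j - a$j$i) + t * (W$i$j * (b$i$j - b$j$i) - W$i$j * (a$i$j - a$j$i)))" for i
    by (rule sum.cong) (simp_all add: algebra_simps)
  then show ?thesis
    by (simp add: Aop_def vec_eq_iff sum.distrib flip: sum_distrib_left sum_subtractf)
qed

lemma gvec_lin: "gvec lam \<sigma> W c (a + t *\<^sub>R (b - a)) (v0 + t *\<^sub>R (v - v0))
   = gvec lam \<sigma> W c a v0 + t *\<^sub>R (gvec lam \<sigma> W c b v - gvec lam \<sigma> W c a v0)"
  unfolding gvec_def Aop_lin by (simp add: algebra_simps)

lemma D_alt: "dual_feasible = {\<alpha>. \<forall>i. \<forall>j. \<bar>\<alpha>$i$j\<bar> \<le> 1 \<and> \<alpha>$i$j = - \<alpha>$j$i}"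
  unfolding dual_feasible_def by blast

lemma D_conv:
  assumes a: "a \<in> dual_feasible" and b: "b \<in> dual_feasible" and t: "0 \<le> t" "t \<le> 1"
  shows "a + t *\<^sub>R (b - a) \<in> dual_feasible"
  unfolding D_alt mem_Collect_eq
proof (intro allI conjI)
  fix i j
  have ha: "\<bar>a$i$j\<bar> \<le> 1" "a$i$j = - a$j$i" using a unfolding D_alt by blast+
  have hb: "\<bar>b$i$j\<bar> \<le> 1" "b$i$j = - b$j$i" using b unfolding D_alt by blast+
  have "\<bar>(1-t) * a$i$j + t * b$i$j\<bar> \<le> (1-t) * \<bar>a$i$j\<bar> + t * \<bar>b$i$j\<bar>"
    using t by (metis abs_mult abs_of_nonneg abs_triangle_ineq diff_ge_0_iff_ge)
  also have "\<dots> \<le> (1-t) * 1 + t * 1"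
    using t ha hb by (intro add_mono mult_left_mono) auto
  finally show "\<bar>(a + t *\<^sub>R (b - a))$i$j\<bar> \<le> 1" by (simp add: algebra_simps)
  show "(a + t *\<^sub>R (b - a))$i$j = - (a + t *\<^sub>R (b - a))$j$i"
    using ha(2) hb(2) by (simp add: algebra_simps)
qed

lemma S_conv:
  assumes a: "a \<in> simplex_set" and b: "b \<in> simplex_set" and t: "0 \<le> t" "t \<le> 1"
  shows "a + t *\<^sub>R (b - a) \<in> simplex_set"
proof -
  have "0 \<le> (a + t *\<^sub>R (b - a))$i" for i
  proof -
    have "0 \<le> (1-t) * a$i + t * b$i" using a b t by (intro add_nonneg_nonneg mult_nonneg_nonneg) (auto simp: simplex_set_def)
    then show ?thesis by (simp add: algebra_simps)
  qed
  moreover have "(\<Sum>i\<in>UNIV. (a + t *\<^sub>R (b - a))$i) = 1"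
    using a b by (simp add: simplex_set_def sum.distrib sum_distrib_left[symmetric] sum_subtractf)
  ultimately show ?thesis by (simp add: simplex_set_def)
qed

lemma weak:
  assumes symW: "\<forall>i j. W$i$j = W$j$i" and nonnegW: "\<forall>i j. 0 \<le> W$i$j"
    and lam: "0 \<le> lam" and sig: "0 \<le> \<sigma>"
    and a: "\<alpha> \<in> dual_feasible" and v: "v \<in> simplex_set" and u: "u \<in> orthant"
  shows "primal_obj lam \<sigma> W c u \<ge> - dual_obj lam \<sigma> W c \<alpha> v + 1/2 * (norm (u - dual_point lam \<sigma> W c \<alpha> v))^2"
  using Fge[OF symW nonnegW lam sig a v, of u c] quad[OF u, of "gvec lam \<sigma> W c \<alpha> v"]
  unfolding primal_obj_def dual_obj_g dual_point_g by linarith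

lemma dual_opt:
  assumes symW: "\<forall>i j. W$i$j = W$j$i" and nonnegW: "\<forall>i j. 0 \<le> W$i$j"
    and lam: "0 \<le> lam" and sig: "0 \<le> \<sigma>"
    and a0: "\<alpha>0 \<in> dual_feasible" and v0: "v0 \<in> simplex_set"
    and opt: "\<forall>\<alpha>'\<in>dual_feasible. \<forall>v'\<in>simplex_set. dual_obj lam \<sigma> W c \<alpha>0 v0 \<le> dual_obj lam \<sigma> W c \<alpha>' v'"
  shows "primal_obj lam \<sigma> W c (dual_point lam \<sigma> W c \<alpha>0 v0) = - dual_obj lam \<sigma> W c \<alpha>0 v0"
proof -
  define g0 where "g0 = gvec lam \<sigma> W c \<alpha>0 v0"
  define us where "us = dual_point lam \<sigma> W c \<alpha>0 v0"
  have us: "us = pos_part (-g0)" by (simp add: us_def g0_def dual_point_g)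
  have fo: "inner us (gvec lam \<sigma> W c \<alpha> v) \<le> inner us g0" if a: "\<alpha> \<in> dual_feasible" and v: "v \<in> simplex_set" for \<alpha> v
  proof -
    have "inner (pos_part (-g0)) (gvec lam \<sigma> W c \<alpha> v - g0) \<le> 0"
    proof (rule first_order, intro allI impI)
      fix t :: real assume t: "0 < t \<and> t \<le> 1"
      have "dual_obj lam \<sigma> W c \<alpha>0 v0 \<le> dual_obj lam \<sigma> W c (\<alpha>0 + t *\<^sub>R (\<alpha> - \<alpha>0)) (v0 + t *\<^sub>R (v - v0))"
        using opt D_conv[OF a0 a, of t] S_conv[OF v0 v, of t] t by auto
      then show "(norm (pos_part (-g0)))^2 \<le> (norm (pos_part (-(g0 + t *\<^sub>R (gvec lam \<sigma> W c \<alpha> v - g0)))))^2"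
        unfolding dual_obj_g gvec_lin g0_def by simp
    qed
    then show ?thesis using us by (simp add: inner_diff_right)
  qed
  obtain \<alpha>1 v1 where a1: "\<alpha>1 \<in> dual_feasible" and v1: "v1 \<in> simplex_set"
    and e1: "inner us (gvec lam \<sigma> W c \<alpha>1 v1) = Fobj lam \<sigma> W c us"
    using Fattain[OF symW] by blast
  have "Fobj lam \<sigma> W c us = inner us g0"
    using fo[OF a1 v1] e1 Fge[OF symW nonnegW lam sig a0 v0, of us c] unfolding g0_def by linarith
  then show ?thesis using quad_eq[of g0] unfolding primal_obj_def us_def[symmetric] dual_obj_g g0_def[symmetric] us
    by linarith
qed

lemma compact_D: "compact (dual_feasible :: (real^'m^'m) set)"
proof -
  have cl: "closed (dual_feasible :: (real^'m^'m) set)"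
    unfolding D_alt
    by (intro closed_Collect_all closed_Collect_conj closed_Collect_le closed_Collect_eq continuous_intros)
  have "bounded (dual_feasible :: (real^'m^'m) set)"
    unfolding bounded_iff
  proof (intro exI ballI)
    fix \<alpha> :: "real^'m^'m" assume a: "\<alpha> \<in> dual_feasible"
    have "norm \<alpha> \<le> (\<Sum>i\<in>UNIV. norm (\<alpha>$i))" unfolding norm_vec_def by (rule L2_set_le_sum) auto
    also have "\<dots> \<le> (\<Sum>i\<in>UNIV. \<Sum>j\<in>UNIV. \<bar>\<alpha>$i$j\<bar>)" by (intro sum_mono norm_le_l1_cart)
    also have "\<dots> \<le> (\<Sum>i\<in>(UNIV::'m set). \<Sum>j\<in>(UNIV::'m set). 1)"
    proof (intro sum_mono)
      fix i j show "\<bar>\<alpha>$i$j\<bar> \<le> 1" using a unfolding D_alt by blast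
    qed
    finally show "norm \<alpha> \<le> (\<Sum>i\<in>(UNIV::'m set). \<Sum>j\<in>(UNIV::'m set). (1::real))" .
  qed
  with cl show ?thesis by (simp add: compact_eq_bounded_closed)
qed

lemma compact_S: "compact (simplex_set :: (real^'m) set)"
proof -
  have cl: "closed (simplex_set :: (real^'m) set)"
    unfolding simplex_set_def
    by (intro closed_Collect_all closed_Collect_conj closed_Collect_le closed_Collect_eq continuous_intros)
  have "bounded (simplex_set :: (real^'m) set)"
    unfolding bounded_iff
  proof (intro exI ballI)
    fix v :: "real^'m" assume v: "v \<in> simplex_set"
    have "norm v \<le> (\<Sum>i\<in>UNIV. \<bar>v$i\<bar>)" by (rule norm_le_l1_cart)
    also have "\<dots> = 1" using v by (simp add: simplex_set_def)
    finally show "norm v \<le> 1" .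
  qed
  with cl show ?thesis by (simp add: compact_eq_bounded_closed)
qed

lemma cont_dual: "continuous_on UNIV (\<lambda>p. dual_obj lam \<sigma> W c (fst p) (snd p))"
  unfolding dual_obj_g gvec_def pos_part_def Aop_def
  by (intro continuous_intros)

lemma nonempty_DS: "(0::real^'m^'m) \<in> dual_feasible" "((\<chi> i. if i = k then 1 else 0) :: real^'m) \<in> (simplex_set :: (real^'m) set)"
  by (auto simp: dual_feasible_def simplex_set_def)

lemma orth_scale: "u \<in> orthant \<Longrightarrow> 0 \<le> t \<Longrightarrow> t *\<^sub>R u \<in> orthant"
  by (simp add: orthant_def)

lemma P_scale: "0 \<le> t \<Longrightarrow> primal_obj lam \<sigma> W c (t *\<^sub>R u) = t * Fobj lam \<sigma> W c u + 1/2 * t^2 * (norm u)^2"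
  by (simp add: primal_obj_def Fhom power_mult_distrib)

lemma part3:
  fixes us :: "real^'m"
  assumes us: "us \<in> orthant" and opt: "\<forall>u\<in>orthant. primal_obj lam \<sigma> W c us \<le> primal_obj lam \<sigma> W c u"
  shows "(us \<noteq> 0 \<longrightarrow> (\<forall>u\<in>orthant. norm u \<le> 1 \<longrightarrow>
              Fobj lam \<sigma> W c ((1 / norm us) *\<^sub>R us) \<le> Fobj lam \<sigma> W c u))
      \<and> (us = 0 \<longrightarrow> (\<forall>u\<in>orthant. norm u \<le> 1 \<longrightarrow> Fobj lam \<sigma> W c 0 \<le> Fobj lam \<sigma> W c u))"
proof -
  have P0: "primal_obj lam \<sigma> W c 0 = 0" by (simp add: primal_obj_def F0)
  have neg: "primal_obj lam \<sigma> W c us \<le> - ((Fobj lam \<sigma> W c u)^2) / (2 * (norm u)^2) \<and> u \<noteq> 0" if u: "u \<in> orthant" and Fu: "Fobj lam \<sigma> W c u < 0" for u :: "real^'m"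
  proof -
    have u0: "u \<noteq> 0" using Fu F0[of lam \<sigma> W c] by auto
    define m where "m = (norm u)^2"
    have m0: "m > 0" using u0 by (simp add: m_def)
    define t where "t = - Fobj lam \<sigma> W c u / m"
    have t0: "0 \<le> t" using Fu m0 by (simp add: t_def divide_nonpos_pos)
    have "primal_obj lam \<sigma> W c us \<le> primal_obj lam \<sigma> W c (t *\<^sub>R u)" using opt orth_scale[OF u t0] by blast
    also have "\<dots> = t * Fobj lam \<sigma> W c u + 1/2 * t^2 * m" using P_scale[OF t0] by (simp add: m_def)
    also have "\<dots> = - ((Fobj lam \<sigma> W c u)^2) / (2 * m)" using m0 by (simp add: t_def field_simps power2_eq_square)
    finally show ?thesis using u0 by (simp add: m_def)
  qed
  show ?thesis
  proof (intro conjI impI ballI)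
    assume "us = 0"
    fix u :: "real^'m" assume u: "u \<in> orthant" and "norm u \<le> 1"
    show "Fobj lam \<sigma> W c 0 \<le> Fobj lam \<sigma> W c u"
    proof (rule ccontr)
      assume "\<not> Fobj lam \<sigma> W c 0 \<le> Fobj lam \<sigma> W c u"
      hence Fu: "Fobj lam \<sigma> W c u < 0" by (simp add: F0)
      have "primal_obj lam \<sigma> W c us \<le> - ((Fobj lam \<sigma> W c u)^2) / (2 * (norm u)^2)" "u \<noteq> 0" using neg[OF u Fu] by auto
      moreover have "(Fobj lam \<sigma> W c u)^2 / (2 * (norm u)^2) > 0"
        using Fu \<open>u \<noteq> 0\<close> by (intro divide_pos_pos) auto
      ultimately have "primal_obj lam \<sigma> W c us < 0" by linarith
      with \<open>us = 0\<close> P0 show False by simp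
    qed
  next
    assume us0: "us \<noteq> 0"
    define n where "n = norm us"
    have n0: "n > 0" using us0 by (simp add: n_def)
    define F where "F = Fobj lam \<sigma> W c us"
    have Pus: "primal_obj lam \<sigma> W c us = F + 1/2 * n^2" by (simp add: primal_obj_def F_def n_def)
    have Fneg: "F < 0"
    proof (rule ccontr)
      assume "\<not> F < 0"
      moreover have "n^2 > 0" using n0 by simp
      ultimately have "primal_obj lam \<sigma> W c us > 0" using Pus by linarith
      moreover have "primal_obj lam \<sigma> W c us \<le> primal_obj lam \<sigma> W c 0" using opt by (simp add: orthant_def)
      ultimately show False using P0 by simp
    qed
    have Feq: "F = - (n^2)"
    proof -
      define N where "N = n^2"
      have N0: "N > 0" using n0 by (simp add: N_def)
      define s where "s = - F / N"
      have s0: "0 \<le> s" using Fneg N0 by (simp add: s_def divide_nonpos_pos)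
      have "primal_obj lam \<sigma> W c us \<le> primal_obj lam \<sigma> W c (s *\<^sub>R us)" using opt orth_scale[OF us s0] by blast
      also have "\<dots> = s * F + 1/2 * s^2 * N" using P_scale[OF s0] by (simp add: F_def N_def n_def)
      also have "\<dots> = - (F^2) / (2 * N)" using N0 by (simp add: s_def field_simps power2_eq_square)
      finally have "F + N/2 \<le> - (F^2) / (2*N)" using Pus by (simp add: N_def)
      hence "2*N*(F + N/2) \<le> - (F^2)" using N0 by (simp add: le_divide_eq field_simps)
      hence "(F + N)^2 \<le> 0" by (simp add: power2_eq_square algebra_simps)
      hence "F + N = 0" by simp
      then show ?thesis by (simp add: N_def)
    qed
    fix u :: "real^'m" assume u: "u \<in> orthant" and un: "norm u \<le> 1"
    have lhs: "Fobj lam \<sigma> W c ((1 / norm us) *\<^sub>R us) = - n"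
      using Fhom[of "1/norm us" lam \<sigma> W c us] Feq n0 by (simp add: F_def n_def power2_eq_square)
    show "Fobj lam \<sigma> W c ((1 / norm us) *\<^sub>R us) \<le> Fobj lam \<sigma> W c u"
    proof (rule ccontr)
      assume "\<not> ?thesis"
      hence Fu: "Fobj lam \<sigma> W c u < - n" using lhs by simp
      hence Fu0: "Fobj lam \<sigma> W c u < 0" using n0 by simp
      have A: "primal_obj lam \<sigma> W c us \<le> - ((Fobj lam \<sigma> W c u)^2) / (2 * (norm u)^2)" "u \<noteq> 0" using neg[OF u Fu0] by auto
      have m0: "(norm u)^2 > 0" using A(2) by simp
      have m1: "(norm u)^2 \<le> 1" using un by (simp add: power_le_one)
      have "n^2 < (- Fobj lam \<sigma> W c u)^2" using Fu n0 by (intro power_strict_mono) auto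
      hence "n^2 / 2 < (Fobj lam \<sigma> W c u)^2 / 2" by simp
      also have "\<dots> \<le> (Fobj lam \<sigma> W c u)^2 / (2 * (norm u)^2)"
        using m0 m1 by (intro frac_le) auto
      finally have "n^2 / 2 < (Fobj lam \<sigma> W c u)^2 / (2 * (norm u)^2)" .
      with A(1) Pus Feq show False by simp
    qed
  qed
qed

lemma dual_full:
  fixes W :: "real^'m^'m"
  assumes symW: "\<forall>i j. W$i$j = W$j$i" and nonnegW: "\<forall>i j. 0 \<le> W$i$j"
    and lam: "0 \<le> lam" and sig: "0 \<le> \<sigma>"
    and a0: "\<alpha>0 \<in> dual_feasible" and v0: "v0 \<in> simplex_set"
    and opt: "\<forall>\<alpha>'\<in>dual_feasible. \<forall>v'\<in>simplex_set. dual_obj lam \<sigma> W c \<alpha>0 v0 \<le> dual_obj lam \<sigma> W c \<alpha>' v'"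
  shows "dual_point lam \<sigma> W c \<alpha>0 v0 \<in> orthant
         \<and> (\<forall>u\<in>orthant. primal_obj lam \<sigma> W c (dual_point lam \<sigma> W c \<alpha>0 v0) \<le> primal_obj lam \<sigma> W c u)
         \<and> (\<forall>u\<in>orthant. (\<forall>u'\<in>orthant. primal_obj lam \<sigma> W c u \<le> primal_obj lam \<sigma> W c u') \<longrightarrow> u = dual_point lam \<sigma> W c \<alpha>0 v0)"
proof -
  define us where "us = dual_point lam \<sigma> W c \<alpha>0 v0"
  have usO: "us \<in> orthant" by (simp add: us_def dual_point_g pos_part_orth)
  have Peq: "primal_obj lam \<sigma> W c us = - dual_obj lam \<sigma> W c \<alpha>0 v0"
    using dual_opt[OF symW nonnegW lam sig a0 v0 opt] by (simp add: us_def)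
  have W: "primal_obj lam \<sigma> W c u \<ge> primal_obj lam \<sigma> W c us + 1/2 * (norm (u - us))^2" if "u \<in> orthant" for u :: "real^'m"
    using weak[OF symW nonnegW lam sig a0 v0 that, of c] Peq by (simp add: us_def)
  have "\<forall>u\<in>orthant. primal_obj lam \<sigma> W c us \<le> primal_obj lam \<sigma> W c u"
  proof
    fix u :: "real^'m" assume "u \<in> orthant"
    have w: "primal_obj lam \<sigma> W c us + 1/2 * (norm (u - us))^2 \<le> primal_obj lam \<sigma> W c u"
      by (rule W) fact
    have z: "0 \<le> 1/2 * (norm (u - us))^2" by simp
    show "primal_obj lam \<sigma> W c us \<le> primal_obj lam \<sigma> W c u"
      by (rule order_trans[OF _ w]) (use z in simp)
  qed
  moreover have "\<forall>u\<in>orthant. (\<forall>u'\<in>orthant. primal_obj lam \<sigma> W c u \<le> primal_obj lam \<sigma> W c u') \<longrightarrow> u = us"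
  proof (intro ballI impI)
    fix u :: "real^'m" assume u: "u \<in> orthant" and m: "\<forall>u'\<in>orthant. primal_obj lam \<sigma> W c u \<le> primal_obj lam \<sigma> W c u'"
    have pu: "primal_obj lam \<sigma> W c u \<le> primal_obj lam \<sigma> W c us" using m usO by blast
    have "primal_obj lam \<sigma> W c us + 1/2 * (norm (u - us))^2 \<le> primal_obj lam \<sigma> W c us + 0"
      using order_trans[OF W[OF u] pu] by simp
    then have "1/2 * (norm (u - us))^2 \<le> 0" by (simp only: add_le_cancel_left)
    then have "(norm (u - us))^2 \<le> 0" by simp
    then show "u = us" by simp
  qed
  ultimately show ?thesis using usO unfolding us_def by blast
qed

theorem mainTheorem6:
  fixes W :: "real^'m^'m" and c :: "real^'m" and lam \<sigma> :: real
  assumes symW: "\<forall>i j. W$i$j = W$j$i"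
    and nonnegW: "\<forall>i j. 0 \<le> W$i$j"
    and lam: "0 \<le> lam" and sig: "0 \<le> \<sigma>"
  shows
    "(\<exists>u\<in>orthant. \<forall>u'\<in>orthant. primal_obj lam \<sigma> W c u \<le> primal_obj lam \<sigma> W c u')
   \<and> (\<exists>\<alpha>\<in>dual_feasible. \<exists>v\<in>simplex_set. \<forall>\<alpha>'\<in>dual_feasible. \<forall>v'\<in>simplex_set.
          dual_obj lam \<sigma> W c \<alpha> v \<le> dual_obj lam \<sigma> W c \<alpha>' v')
   \<and> (INF u\<in>orthant. primal_obj lam \<sigma> W c u)
       = - (INF p\<in>dual_feasible \<times> simplex_set. dual_obj lam \<sigma> W c (fst p) (snd p))
   \<and> (\<forall>\<alpha>\<in>dual_feasible. \<forall>v\<in>simplex_set.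
        (\<forall>\<alpha>'\<in>dual_feasible. \<forall>v'\<in>simplex_set. dual_obj lam \<sigma> W c \<alpha> v \<le> dual_obj lam \<sigma> W c \<alpha>' v') \<longrightarrow>
        (let ustar = dual_point lam \<sigma> W c \<alpha> v in
           ustar \<in> orthant
         \<and> (\<forall>u\<in>orthant. primal_obj lam \<sigma> W c ustar \<le> primal_obj lam \<sigma> W c u)
         \<and> (\<forall>u\<in>orthant. (\<forall>u'\<in>orthant. primal_obj lam \<sigma> W c u \<le> primal_obj lam \<sigma> W c u') \<longrightarrow> u = ustar)))
   \<and> (\<forall>ustar\<in>orthant. (\<forall>u\<in>orthant. primal_obj lam \<sigma> W c ustar \<le> primal_obj lam \<sigma> W c u) \<longrightarrow>
        (ustar \<noteq> 0 \<longrightarrow>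
           (\<forall>u\<in>orthant. norm u \<le> 1 \<longrightarrow>
              Fobj lam \<sigma> W c ((1 / norm ustar) *\<^sub>R ustar) \<le> Fobj lam \<sigma> W c u))
      \<and> (ustar = 0 \<longrightarrow>
           (\<forall>u\<in>orthant. norm u \<le> 1 \<longrightarrow> Fobj lam \<sigma> W c 0 \<le> Fobj lam \<sigma> W c u)))"
proof -
  let ?D = "\<lambda>p. dual_obj lam \<sigma> W c (fst p) (snd p)"
  have "\<exists>p\<in>dual_feasible \<times> simplex_set. \<forall>q\<in>dual_feasible \<times> simplex_set. ?D p \<le> ?D q"
  proof (rule continuous_attains_inf)
    show "compact (dual_feasible \<times> simplex_set :: ((real^'m^'m) \<times> (real^'m)) set)"
      by (intro compact_Times compact_D compact_S)
    show "dual_feasible \<times> simplex_set \<noteq> ({} :: ((real^'m^'m) \<times> (real^'m)) set)"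
      using nonempty_DS by blast
    show "continuous_on (dual_feasible \<times> simplex_set) ?D"
      by (rule continuous_on_subset[OF cont_dual]) simp
  qed
  then obtain \<alpha>0 v0 where a0: "\<alpha>0 \<in> dual_feasible" and v0: "v0 \<in> simplex_set"
    and opt0: "\<forall>\<alpha>'\<in>dual_feasible. \<forall>v'\<in>simplex_set. dual_obj lam \<sigma> W c \<alpha>0 v0 \<le> dual_obj lam \<sigma> W c \<alpha>' v'"
    by fastforce
  define us where "us = dual_point lam \<sigma> W c \<alpha>0 v0"
  have full0: "us \<in> orthant" "\<forall>u\<in>orthant. primal_obj lam \<sigma> W c us \<le> primal_obj lam \<sigma> W c u"
    using dual_full[OF symW nonnegW lam sig a0 v0 opt0] unfolding us_def by blast+
  have Peq: "primal_obj lam \<sigma> W c us = - dual_obj lam \<sigma> W c \<alpha>0 v0"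
    using dual_opt[OF symW nonnegW lam sig a0 v0 opt0] by (simp add: us_def)
  have I1: "(INF u\<in>orthant. primal_obj lam \<sigma> W c u) = primal_obj lam \<sigma> W c us"
    by (rule cInf_eq_minimum) (use full0 in auto)
  have I2: "(INF p\<in>dual_feasible \<times> simplex_set. ?D p) = dual_obj lam \<sigma> W c \<alpha>0 v0"
    by (rule cInf_eq_minimum) (use a0 v0 opt0 in force)+
  show ?thesis
  proof (intro conjI)
    show "\<exists>u\<in>orthant. \<forall>u'\<in>orthant. primal_obj lam \<sigma> W c u \<le> primal_obj lam \<sigma> W c u'"
      using full0 by blast
    show "\<exists>\<alpha>\<in>dual_feasible. \<exists>v\<in>simplex_set. \<forall>\<alpha>'\<in>dual_feasible. \<forall>v'\<in>simplex_set.
          dual_obj lam \<sigma> W c \<alpha> v \<le> dual_obj lam \<sigma> W c \<alpha>' v'"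
      using a0 v0 opt0 by blast
    show "(INF u\<in>orthant. primal_obj lam \<sigma> W c u)
       = - (INF p\<in>dual_feasible \<times> simplex_set. dual_obj lam \<sigma> W c (fst p) (snd p))"
      using I1 I2 Peq by simp
    show "\<forall>\<alpha>\<in>dual_feasible. \<forall>v\<in>simplex_set.
        (\<forall>\<alpha>'\<in>dual_feasible. \<forall>v'\<in>simplex_set. dual_obj lam \<sigma> W c \<alpha> v \<le> dual_obj lam \<sigma> W c \<alpha>' v') \<longrightarrow>
        (let ustar = dual_point lam \<sigma> W c \<alpha> v in
           ustar \<in> orthant
         \<and> (\<forall>u\<in>orthant. primal_obj lam \<sigma> W c ustar \<le> primal_obj lam \<sigma> W c u)
         \<and> (\<forall>u\<in>orthant. (\<forall>u'\<in>orthant. primal_obj lam \<sigma> W c u \<le> primal_obj lam \<sigma> W c u') \<longrightarrow> u = ustar))"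
      unfolding Let_def using dual_full[OF symW nonnegW lam sig] by blast
    show "\<forall>ustar\<in>orthant. (\<forall>u\<in>orthant. primal_obj lam \<sigma> W c ustar \<le> primal_obj lam \<sigma> W c u) \<longrightarrow>
        (ustar \<noteq> 0 \<longrightarrow>
           (\<forall>u\<in>orthant. norm u \<le> 1 \<longrightarrow>
              Fobj lam \<sigma> W c ((1 / norm ustar) *\<^sub>R ustar) \<le> Fobj lam \<sigma> W c u))
      \<and> (ustar = 0 \<longrightarrow>
           (\<forall>u\<in>orthant. norm u \<le> 1 \<longrightarrow> Fobj lam \<sigma> W c 0 \<le> Fobj lam \<sigma> W c u))"
      using part3 by blast
  qed
qed

end
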